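(* For every $\gamma\in(0,1)$, $$\sum_{n=0}^{\infty}2^n\gamma^{2^n}\le\frac{1}{\ln\frac{1}{\gamma}}\left(\frac{1}{e}+\frac{\gamma}{\ln 2}\right).$$ *)

theory Defs
  imports "HOL-Analysis.Analysis"
begin

end

theory Submission
  imports Defs
begin

lemma sum_bound_aux:
  fixes h c F :: "nat \<Rightarrow> real"
  assumes h0: "\<And>n. 0 \<le> h n" and cdef: "\<And>n. c n = F (Suc n) - F n"
    and Fle: "\<And>n. F n \<le> 0" and lo: "\<And>n. n < k \<Longrightarrow> h n \<le> c n"
    and hi: "\<And>n. n \<ge> k + 2 \<Longrightarrow> h n \<le> c (n - 1)"
    and mid: "h k + h (Suc k) \<le> c k + M"
  shows "suminf h \<le> M - F 0"
proof -
  have A: "sum h {..<N} \<le> F (N - 1) - F 0 + M" if "k + 2 \<le> N" for N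
    using that
  proof (induction N rule: nat_induct_at_least)
    case base
    have "sum h {..<k} \<le> sum c {..<k}" by (rule sum_mono) (simp add: lo)
    also have "\<dots> = F k - F 0" using sum_lessThan_telescope[of F k] by (simp add: cdef)
    finally have "sum h {..<k} \<le> F k - F 0" .
    moreover have "sum h {..<k+2} = sum h {..<k} + h k + h (Suc k)" by simp
    ultimately show ?case using mid cdef[of k] by simp
  next
    case (Suc n)
    have "h n \<le> c (n - 1)" using hi Suc.hyps by simp
    moreover have "c (n - 1) = F n - F (n - 1)" using cdef[of "n-1"] Suc.hyps
      by (simp add: Suc_diff_1 [symmetric])
    ultimately show ?case using Suc.IH by simp
  qed
  have B: "sum h {..<N} \<le> M - F 0" for N
  proof -
    have "sum h {..<N} \<le> sum h {..<max N (k+2)}"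
      by (rule sum_mono2) (auto simp: h0)
    also have "\<dots> \<le> F (max N (k+2) - 1) - F 0 + M" by (rule A) simp
    also have "\<dots> \<le> M - F 0" using Fle[of "max N (k+2) - 1"] by simp
    finally show ?thesis .
  qed
  have "summable h" by (rule summableI_nonneg_bounded[OF h0 B])
  then show ?thesis using B by (rule suminf_le_const)
qed

lemma phi_max:
  fixes t u :: real assumes "0 < t" "0 < u"
  shows "u * exp (- t * u) \<le> 1 / (exp 1 * t)"
proof -
  have "t * u \<le> exp (t * u - 1)" using exp_ge_add_one_self[of "t*u - 1"] by simp
  also have "\<dots> = exp (t * u) / exp 1" by (simp add: exp_diff)
  finally have "exp 1 * t * u \<le> exp (t * u)" by (simp add: field_simps)
  then have "u * (exp 1 * t) \<le> exp (t * u)" by (simp add: algebra_simps)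
  then have "u * (exp 1 * t) / exp (t * u) \<le> 1" by simp
  then show ?thesis using assms by (simp add: exp_minus field_simps)
qed

lemma phi_inc:
  fixes t u v :: real assumes "0 < t" "0 < u" "u \<le> v" "v \<le> 1 / t"
  shows "u * exp (- t * u) \<le> v * exp (- t * v)"
proof -
  have v0: "0 < v" using assms by simp
  have "ln (u / v) \<le> u / v - 1" using assms v0 by (intro ln_le_minus_one) simp
  then have "ln v - ln u \<ge> 1 - u / v" using assms v0 by (simp add: ln_div)
  moreover have "1 - u / v = (v - u) / v" using v0 by (simp add: field_simps)
  moreover have "(v - u) / v \<ge> t * (v - u)"
  proof -
    have "t * v \<le> 1" using assms by (simp add: field_simps)
    then have "(v - u) * (t * v) \<le> (v - u) * 1" using assms by (intro mult_left_mono) auto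
    then have "t * (v - u) * v \<le> (v - u)" by (simp add: algebra_simps)
    then show ?thesis using v0 by (simp add: field_simps)
  qed
  ultimately have "ln u - t * u \<le> ln v - t * v" by (simp add: algebra_simps)
  then have "exp (ln u - t * u) \<le> exp (ln v - t * v)" by simp
  then show ?thesis using assms v0 by (simp add: exp_diff exp_minus field_simps)
qed

lemma phi_dec:
  fixes t u v :: real assumes "0 < t" "1 / t \<le> u" "u \<le> v"
  shows "v * exp (- t * v) \<le> u * exp (- t * u)"
proof -
  have u0: "0 < u" using assms by (smt (verit) divide_pos_pos)
  have v0: "0 < v" using assms u0 by simp
  have "ln (v / u) \<le> v / u - 1" using assms u0 v0 by (intro ln_le_minus_one) simp
  then have "ln v - ln u \<le> (v - u) / u" using u0 v0 by (simp add: ln_div field_simps)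
  moreover have "(v - u) / u \<le> t * (v - u)"
  proof -
    have "1 \<le> t * u" using assms by (simp add: field_simps)
    then have "(v - u) \<le> t * u * (v - u)" using assms
      by (metis diff_ge_0_iff_ge mult_1 mult_right_mono)
    then show ?thesis using u0 by (simp add: field_simps)
  qed
  ultimately have "ln v - t * v \<le> ln u - t * u" by (simp add: algebra_simps)
  then have "exp (ln v - t * v) \<le> exp (ln u - t * u)" by simp
  then show ?thesis using assms u0 v0 by (simp add: exp_diff exp_minus field_simps)
qed

theorem lemma4:
  fixes \<gamma> :: real
  assumes "0 < \<gamma>" and "\<gamma> < 1"
  shows "(\<Sum>n. 2 ^ n * \<gamma> ^ (2 ^ n)) \<le> (1 / ln (1 / \<gamma>)) * (1 / exp 1 + \<gamma> / ln 2)"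
proof -
  define t where "t = ln (1 / \<gamma>)"
  have t0: "0 < t" unfolding t_def using assms by simp
  have lng: "ln \<gamma> = - t" unfolding t_def using assms by (simp add: ln_div)
  define phi where "phi u = u * exp (- t * u)" for u :: real
  define E where "E y = exp (y * ln 2)" for y :: real
  define F where "F y = - exp (- t * E y) / (t * ln 2)" for y :: real
  define h where "h n = phi (2 ^ n)" for n :: nat
  define c where "c n = F (real (Suc n)) - F (real n)" for n :: nat
  define M where "M = 1 / (exp 1 * t)"
  have E_nat: "E (real n) = 2 ^ n" for n
    unfolding E_def using exp_of_nat_mult[of n "ln (2::real)"] by simp
  have term_eq: "2 ^ n * \<gamma> ^ (2 ^ n) = h n" for n :: nat
  proof -
    have "\<gamma> ^ (2 ^ n) = exp (ln \<gamma>) ^ (2 ^ n)" using assms by simp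
    also have "\<dots> = exp (real (2 ^ n) * ln \<gamma>)" by (rule exp_of_nat_mult[symmetric])
    finally show ?thesis unfolding h_def phi_def using lng by simp
  qed
  have h0: "0 \<le> h n" for n unfolding h_def phi_def by simp
  have hM: "h n \<le> M" for n unfolding h_def phi_def M_def using phi_max[OF t0] by simp
  have Fle: "F (real n) \<le> 0" for n unfolding F_def using t0 by simp
  have deriv: "(F has_real_derivative phi (E y)) (at y)" for y
  proof -
    have "(E has_real_derivative E y * ln 2) (at y)" unfolding E_def
      by (auto intro!: derivative_eq_intros)
    then have "(F has_real_derivative (- exp (- t * E y) * (- t * (E y * ln 2))) / (t * ln 2)) (at y)"
      unfolding F_def by (auto intro!: derivative_eq_intros)
    moreover have "(- exp (- t * E y) * (- t * (E y * ln 2))) / (t * ln 2) = phi (E y)"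
      unfolding phi_def using t0 by (simp add: field_simps)
    ultimately show ?thesis by simp
  qed
  have cmin: "min (h n) (h (Suc n)) \<le> c n" for n
  proof -
    obtain z where z: "real n < z" "z < real (Suc n)"
      "F (real (Suc n)) - F (real n) = (real (Suc n) - real n) * phi (E z)"
      using MVT2[of "real n" "real (Suc n)" F "\<lambda>y. phi (E y)"] deriv by auto
    have cz: "c n = phi (E z)" unfolding c_def using z by simp
    have Emono: "E a \<le> E b" if "a \<le> b" for a b
      unfolding E_def using that by (simp add: mult_right_mono)
    have Ez1: "2 ^ n \<le> E z" using Emono[of "real n" z] z E_nat[of n] by simp
    have Ez2: "E z \<le> 2 ^ Suc n" using Emono[of z "real (Suc n)"] z E_nat[of "Suc n"] by simp
    show ?thesis
    proof (cases "E z \<le> 1 / t")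
      case True
      have "h n \<le> phi (E z)" unfolding h_def phi_def
        using phi_inc[OF t0 _ Ez1 True] by simp
      then show ?thesis using cz by simp
    next
      case False
      have "h (Suc n) \<le> phi (E z)" unfolding h_def phi_def
        using phi_dec[OF t0 _ Ez2] False by simp
      then show ?thesis using cz by simp
    qed
  qed
  obtain k0 where k0: "1 / t < 2 ^ Suc k0"
  proof -
    obtain m :: nat where "1 / t < real m" using reals_Archimedean2 by blast
    moreover have "real m < 2 ^ m" by (rule of_nat_less_two_power)
    moreover have "(2::real) ^ m \<le> 2 ^ Suc m" by simp
    ultimately show ?thesis using that[of m] by linarith
  qed
  define k where "k = (LEAST k. 1 / t < 2 ^ Suc k)"
  have kk: "1 / t < 2 ^ Suc k" unfolding k_def by (rule LeastI[of _ k0]) (rule k0)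
  have lo: "h n \<le> c n" if "n < k" for n
  proof -
    have "\<not> 1 / t < 2 ^ Suc n" using that unfolding k_def using not_less_Least by blast
    then have "h n \<le> h (Suc n)" unfolding h_def phi_def
      using phi_inc[OF t0, of "2^n" "2 ^ Suc n"] by simp
    then show ?thesis using cmin[of n] by simp
  qed
  have hi: "h n \<le> c (n - 1)" if "n \<ge> k + 2" for n
  proof -
    have "(2::real) ^ Suc k \<le> 2 ^ (n - 1)" using that by (intro power_increasing) auto
    then have "1 / t \<le> 2 ^ (n - 1)" using kk by simp
    moreover have "(2::real) ^ (n - 1) \<le> 2 ^ n" by (intro power_increasing) auto
    ultimately have "h n \<le> h (n - 1)" unfolding h_def phi_def
      using phi_dec[OF t0] by blast
    moreover have "Suc (n - 1) = n" using that by simp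
    ultimately show ?thesis using cmin[of "n - 1"] by simp
  qed
  have mid: "h k + h (Suc k) \<le> c k + M"
    using cmin[of k] hM[of k] hM[of "Suc k"] by (simp add: min_def split: if_splits)
  have "suminf h \<le> M - F 0"
    using sum_bound_aux[of h c "\<lambda>n. F (real n)" k M] h0 Fle lo hi mid
    unfolding c_def by auto
  moreover have "F 0 = - \<gamma> / (t * ln 2)"
    proof -
    have "exp (- t) = \<gamma>" using lng assms by (metis exp_ln)
    then show ?thesis unfolding F_def E_def by simp
  qed
  ultimately have "suminf h \<le> M + \<gamma> / (t * ln 2)" by simp
  also have "\<dots> = (1 / t) * (1 / exp 1 + \<gamma> / ln 2)" unfolding M_def using t0
    by (simp add: field_simps)
  finally show ?thesis using term_eq t_def by simp
qed

end
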